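(* Consider the system \[ x_{k+1} = x_k - \rho y_k + \hat g(y_k,w_k),\qquad y_{k+1} = (1-\beta)y_k + \hat h(y_{k-1},w_{k-1})\bigl(J(x_k)-J(x_{k-1})\bigr) \] with the setup described in the context. Then for every $k\ge1$, \[ \mathbb{E}[\tilde x_{k+1}]=\mathbb{E}[\tilde x_k]-\rho\,\mathbb{E}[y_k],\qquad \mathbb{E}[y_{k+1}]=(1-\beta)\mathbb{E}[y_k]+\mu\gamma\,\mathbb{E}[\tilde x_k]. \]
   Context: Setup. Parameters: $\rho>0$, $\beta\in(0,2)$, $\varepsilon>0$, $\omega>0$. The random variables $w_i$, $i\in\mathbb{N}\cup\{0\}$, are i.i.d., each taking the value $-\omega$ or $\omega$ with probability $1/2$. The functions $h,g:\mathbb{R}\to\mathbb{R}$ are odd, satisfy $\mathrm{sign}(g(w))=\mathrm{sign}(h(w))$ for all $w$, and $g(w)=h(w)=0$ if and only if $w=0$. Define $\hat h(y,w):=\frac{h(w)}{|y|+\varepsilon}$ and $\hat g(y,w):=(|y|+\varepsilon)g(w)$. The objective is $J(x)=J^*+\frac{\mu}{2}(x-x^* )^2$ with $\mu>0$, $x^*,J^*\in\mathbb{R}$. The initial data $x_0,y_0$ and the initialization $y_1$ (the $y$-update being applied for $k\ge1$) are deterministic. Notation: $\tilde x_k:=x_k-x^*$, $\gamma:=\mathbb{E}[h(w_k)g(w_k)]$. *)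

theory Defs
  imports "HOL-Probability.Probability"
begin

definition hhat :: "real \<Rightarrow> (real \<Rightarrow> real) \<Rightarrow> real \<Rightarrow> real \<Rightarrow> real" where
  "hhat \<epsilon> h y v = h v / (\<bar>y\<bar> + \<epsilon>)"

definition ghat :: "real \<Rightarrow> (real \<Rightarrow> real) \<Rightarrow> real \<Rightarrow> real \<Rightarrow> real" where
  "ghat \<epsilon> g y v = (\<bar>y\<bar> + \<epsilon>) * g v"

fun traj :: "real \<Rightarrow> real \<Rightarrow> real \<Rightarrow> (real \<Rightarrow> real) \<Rightarrow> (real \<Rightarrow> real) \<Rightarrow> (real \<Rightarrow> real)
     \<Rightarrow> real \<Rightarrow> real \<Rightarrow> real \<Rightarrow> (nat \<Rightarrow> real) \<Rightarrow> nat \<Rightarrow> real \<times> real" where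
  "traj \<rho> \<beta> \<epsilon> h g J x0 y0 y1 W 0 = (x0, y0)"
| "traj \<rho> \<beta> \<epsilon> h g J x0 y0 y1 W (Suc 0) = (x0 - \<rho> * y0 + ghat \<epsilon> g y0 (W 0), y1)"
| "traj \<rho> \<beta> \<epsilon> h g J x0 y0 y1 W (Suc (Suc k)) =
     (let (xk, yk) = traj \<rho> \<beta> \<epsilon> h g J x0 y0 y1 W k;
          (xk1, yk1) = traj \<rho> \<beta> \<epsilon> h g J x0 y0 y1 W (Suc k)
      in (xk1 - \<rho> * yk1 + ghat \<epsilon> g yk1 (W (Suc k)),
          (1 - \<beta>) * yk1 + hhat \<epsilon> h yk (W k) * (J xk1 - J xk)))"

end

theory Submission
  imports Defs
begin


lemma traj_local:
  assumes "\<And>i. i < m \<Longrightarrow> W i = V i"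
  shows "n \<le> m \<Longrightarrow> traj \<rho> \<beta> \<epsilon> h g J x0 y0 y1 W n = traj \<rho> \<beta> \<epsilon> h g J x0 y0 y1 V n"
proof -
  let ?P = "\<lambda>n. traj \<rho> \<beta> \<epsilon> h g J x0 y0 y1 W n = traj \<rho> \<beta> \<epsilon> h g J x0 y0 y1 V n"
  have "(n \<le> m \<longrightarrow> ?P n) \<and> (Suc n \<le> m \<longrightarrow> ?P (Suc n))" for n
  proof (induction n)
    case 0
    then show ?case using assms[of 0] by auto
  next
    case (Suc n)
    have "?P (Suc (Suc n))" if "Suc (Suc n) \<le> m"
      using Suc that assms[of "Suc n"] assms[of n] by (simp add: Let_def case_prod_beta)
    then show ?case using Suc by auto
  qed
  then show "n \<le> m \<Longrightarrow> ?P n" by blast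
qed

lemma traj_sgn:
  assumes "\<omega> > 0" "\<And>i. W i = - \<omega> \<or> W i = \<omega>"
    "\<And>v. h (- v) = - h v" "\<And>v. g (- v) = - g v"
  shows "traj \<rho> \<beta> \<epsilon> h g J x0 y0 y1 W n
       = traj \<rho> \<beta> \<epsilon> (\<lambda>v. h \<omega> * sgn v) (\<lambda>v. g \<omega> * sgn v) J x0 y0 y1 W n"
proof -
  have H: "h (W i) = h \<omega> * sgn (W i)" "g (W i) = g \<omega> * sgn (W i)" for i
    using assms(2)[of i] assms(1) assms(3,4) by auto
  let ?P = "\<lambda>n. traj \<rho> \<beta> \<epsilon> h g J x0 y0 y1 W n
       = traj \<rho> \<beta> \<epsilon> (\<lambda>v. h \<omega> * sgn v) (\<lambda>v. g \<omega> * sgn v) J x0 y0 y1 W n"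
  have "?P n \<and> ?P (Suc n)" for n
  proof (induction n)
    case 0
    then show ?case by (auto simp: ghat_def H)
  next
    case (Suc n)
    then show ?case by (simp add: Let_def case_prod_beta ghat_def hhat_def H)
  qed
  then show ?thesis by blast
qed

lemma traj_meas:
  assumes J: "J \<in> borel_measurable borel" and W: "\<And>i. i < m \<Longrightarrow> W i \<in> borel_measurable N"
  shows "n \<le> m \<Longrightarrow>
    (\<lambda>s. fst (traj \<rho> \<beta> \<epsilon> (\<lambda>v. a * sgn v) (\<lambda>v. b * sgn v) J x0 y0 y1 (\<lambda>i. W i s) n)) \<in> borel_measurable N
  \<and> (\<lambda>s. snd (traj \<rho> \<beta> \<epsilon> (\<lambda>v. a * sgn v) (\<lambda>v. b * sgn v) J x0 y0 y1 (\<lambda>i. W i s) n)) \<in> borel_measurable N"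
proof -
  let ?P = "\<lambda>n. (\<lambda>s. fst (traj \<rho> \<beta> \<epsilon> (\<lambda>v. a * sgn v) (\<lambda>v. b * sgn v) J x0 y0 y1 (\<lambda>i. W i s) n)) \<in> borel_measurable N
  \<and> (\<lambda>s. snd (traj \<rho> \<beta> \<epsilon> (\<lambda>v. a * sgn v) (\<lambda>v. b * sgn v) J x0 y0 y1 (\<lambda>i. W i s) n)) \<in> borel_measurable N"
  have "(n \<le> m \<longrightarrow> ?P n) \<and> (Suc n \<le> m \<longrightarrow> ?P (Suc n))" for n
  proof (induction n)
    case 0
    have [measurable]: "W 0 \<in> borel_measurable N" if "1 \<le> m" using W that by simp
    show ?case by (auto simp: ghat_def)
  next
    case (Suc n)
    have "?P (Suc (Suc n))" if "Suc (Suc n) \<le> m"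
    proof -
      have [measurable]: "W (Suc n) \<in> borel_measurable N" "W n \<in> borel_measurable N" using W that by auto
      have [measurable]: "J \<in> borel_measurable borel" by (rule J)
      have [measurable]: 
        "(\<lambda>s. fst (traj \<rho> \<beta> \<epsilon> (\<lambda>v. a * sgn v) (\<lambda>v. b * sgn v) J x0 y0 y1 (\<lambda>i. W i s) n)) \<in> borel_measurable N"
        "(\<lambda>s. snd (traj \<rho> \<beta> \<epsilon> (\<lambda>v. a * sgn v) (\<lambda>v. b * sgn v) J x0 y0 y1 (\<lambda>i. W i s) n)) \<in> borel_measurable N"
        "(\<lambda>s. fst (traj \<rho> \<beta> \<epsilon> (\<lambda>v. a * sgn v) (\<lambda>v. b * sgn v) J x0 y0 y1 (\<lambda>i. W i s) (Suc n))) \<in> borel_measurable N"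
        "(\<lambda>s. snd (traj \<rho> \<beta> \<epsilon> (\<lambda>v. a * sgn v) (\<lambda>v. b * sgn v) J x0 y0 y1 (\<lambda>i. W i s) (Suc n))) \<in> borel_measurable N"
        using Suc that by auto
      show ?thesis
        by (simp add: Let_def case_prod_beta ghat_def hhat_def)
    qed
    then show ?case using Suc by auto
  qed
  then show "n \<le> m \<Longrightarrow> ?P n" by blast
qed



lemma indep_prod:
  fixes w :: "nat \<Rightarrow> 'a \<Rightarrow> real" and m :: nat and F :: "(nat \<Rightarrow> real) \<Rightarrow> real" and G :: "real \<Rightarrow> real"
  assumes P: "prob_space M" and ind: "prob_space.indep_vars M (\<lambda>_. borel) w UNIV"
    and F: "F \<in> borel_measurable (PiM {..<m} (\<lambda>_. borel))" and G: "G \<in> borel_measurable borel"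
    and iF: "integrable M (\<lambda>s. F (restrict (\<lambda>i. w i s) {..<m}))"
    and iG: "integrable M (\<lambda>s. G (w m s))"
  shows "(\<integral>s. F (restrict (\<lambda>i. w i s) {..<m}) * G (w m s) \<partial>M)
       = (\<integral>s. F (restrict (\<lambda>i. w i s) {..<m}) \<partial>M) * (\<integral>s. G (w m s) \<partial>M)"
proof -
  interpret prob_space M by (rule P)
  have "indep_var (PiM {..<m} (\<lambda>_. borel)) (\<lambda>s. restrict (\<lambda>i. w i s) {..<m})
                  (PiM {m} (\<lambda>_. borel)) (\<lambda>s. restrict (\<lambda>i. w i s) {m})"
    by (rule indep_var_restrict[OF ind]) (simp_all add: disjoint_iff)
  then have "indep_var borel (F \<circ> (\<lambda>s. restrict (\<lambda>i. w i s) {..<m}))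
                  borel ((\<lambda>v. G (v m)) \<circ> (\<lambda>s. restrict (\<lambda>i. w i s) {m}))"
    by (rule indep_var_compose) (use F G in measurable)
  then have I: "indep_var borel (\<lambda>s. F (restrict (\<lambda>i. w i s) {..<m})) borel (\<lambda>s. G (w m s))"
    by (simp add: comp_def)
  show ?thesis by (rule indep_var_lebesgue_integral[OF I iF iG])
qed

lemma alg:
  fixes c a x y y1 :: real
  assumes "c^2 = 1" "a > 0"
  shows "(1-\<beta>)*y1 + hw*c*((Jstar + \<mu>/2*(x - \<rho>*y + a*(gw*c) - xs)^2) - (Jstar + \<mu>/2*(x - xs)^2))/a
   = (1-\<beta>)*y1 + c*(\<mu>/2*hw*((-\<rho>*y)*(2*(x-xs) - \<rho>*y)/a + a*gw^2)) + \<mu>*hw*gw*(x - xs - \<rho>*y)"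
proof -
  have c3: "c^3 = c" using assms(1) by (metis power3_eq_cube power2_eq_square mult.right_neutral mult.assoc)
  have c2: "c*c = 1" using assms(1) by (simp add: power2_eq_square)
  show ?thesis using assms(2)
    using power2_eq_1_iff[of c] assms(1) by (auto simp: field_simps power2_eq_square)
qed



lemma divbound:
  fixes a s D K y \<epsilon> :: real
  assumes "\<bar>s\<bar> \<le> 1" "\<bar>D\<bar> \<le> K" "\<epsilon> > 0"
  shows "\<bar>a * s * D / (\<bar>y\<bar> + \<epsilon>)\<bar> \<le> \<bar>a\<bar> * K / \<epsilon>"
proof -
  have K0: "0 \<le> K" using assms(2) by linarith
  have "\<bar>s\<bar> * \<bar>D\<bar> \<le> 1 * K" by (rule mult_mono) (use assms K0 in auto)
  then have "\<bar>a\<bar> * (\<bar>s\<bar> * \<bar>D\<bar>) \<le> \<bar>a\<bar> * K" by (simp add: mult_left_mono)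
  then have 1: "\<bar>a * s * D\<bar> \<le> \<bar>a\<bar> * K" by (simp add: abs_mult mult.assoc)
  have pos: "\<bar>y\<bar> + \<epsilon> > 0" using assms(3) by simp
  have "\<bar>a * s * D / (\<bar>y\<bar> + \<epsilon>)\<bar> = \<bar>a * s * D\<bar> / (\<bar>y\<bar> + \<epsilon>)"
    using pos by (simp add: abs_divide)
  also have "\<dots> \<le> \<bar>a\<bar> * K / (\<bar>y\<bar> + \<epsilon>)" using 1 pos by (simp add: divide_right_mono)
  also have "\<dots> \<le> \<bar>a\<bar> * K / \<epsilon>"
    by (rule divide_left_mono) (use assms K0 in auto)
  finally show ?thesis .
qed

lemma Jbound:
  fixes x B :: real
  assumes "\<bar>x\<bar> \<le> B"
  shows "\<bar>Jstar + \<mu> / 2 * (x - xstar)\<^sup>2\<bar> \<le> \<bar>Jstar\<bar> + \<bar>\<mu>\<bar> * (B + \<bar>xstar\<bar>)\<^sup>2"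
proof -
  have "\<bar>x - xstar\<bar> \<le> B + \<bar>xstar\<bar>" using assms by linarith
  then have sq: "(x - xstar)\<^sup>2 \<le> (B + \<bar>xstar\<bar>)\<^sup>2"
    by (metis abs_ge_zero power2_abs power_mono)
  have "\<bar>\<mu> / 2 * (x - xstar)\<^sup>2\<bar> = \<bar>\<mu>\<bar> / 2 * (x - xstar)\<^sup>2" by (simp add: abs_mult)
  also have "\<dots> \<le> \<bar>\<mu>\<bar> / 2 * (B + \<bar>xstar\<bar>)\<^sup>2" using sq by (simp add: mult_left_mono)
  also have "\<dots> \<le> \<bar>\<mu>\<bar> * (B + \<bar>xstar\<bar>)\<^sup>2" by simp
  finally show ?thesis by linarith
qed
lemma absdiff: "\<bar>p\<bar> \<le> (K::real) \<Longrightarrow> \<bar>q\<bar> \<le> K \<Longrightarrow> \<bar>p - q\<bar> \<le> 2 * K" by linarith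

lemma traj_bound:
  assumes eps: "\<epsilon> > 0"
  shows "\<exists>B. \<forall>W. \<bar>fst (traj \<rho> \<beta> \<epsilon> (\<lambda>v. a * sgn v) (\<lambda>v. b * sgn v) (\<lambda>x. Jstar + \<mu> / 2 * (x - xstar)\<^sup>2) x0 y0 y1 W n)\<bar> \<le> B
      \<and> \<bar>snd (traj \<rho> \<beta> \<epsilon> (\<lambda>v. a * sgn v) (\<lambda>v. b * sgn v) (\<lambda>x. Jstar + \<mu> / 2 * (x - xstar)\<^sup>2) x0 y0 y1 W n)\<bar> \<le> B"
proof -
  define T where "T = traj \<rho> \<beta> \<epsilon> (\<lambda>v. a * sgn v) (\<lambda>v. b * sgn v) (\<lambda>x. Jstar + \<mu> / 2 * (x - xstar)\<^sup>2) x0 y0 y1"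
  let ?P = "\<lambda>n. \<exists>B. \<forall>W. \<bar>fst (T W n)\<bar> \<le> B \<and> \<bar>snd (T W n)\<bar> \<le> B"
  have sg: "\<bar>sgn v\<bar> \<le> 1" for v :: real by (simp add: abs_sgn_eq)
  have gb: "\<bar>(\<bar>y\<bar> + \<epsilon>) * (b * sgn v)\<bar> \<le> (B + \<epsilon>) * \<bar>b\<bar>" if "\<bar>y\<bar> \<le> B" for y v B :: real
  proof -
    have "\<bar>(\<bar>y\<bar> + \<epsilon>) * (b * sgn v)\<bar> = (\<bar>y\<bar> + \<epsilon>) * (\<bar>b\<bar> * \<bar>sgn v\<bar>)"
      using eps by (simp add: abs_mult)
    also have "\<dots> \<le> (B + \<epsilon>) * (\<bar>b\<bar> * 1)"
      using that eps sg[of v] by (intro mult_mono) (auto intro: mult_left_mono)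
    finally show ?thesis by simp
  qed
  have "?P n \<and> ?P (Suc n)" for n
  proof (induction n)
    case 0
    have "\<bar>fst (T W (Suc 0))\<bar> \<le> \<bar>x0\<bar> + \<bar>\<rho> * y0\<bar> + (\<bar>y0\<bar> + \<epsilon>) * \<bar>b\<bar>" for W
    proof -
      have e: "fst (T W (Suc 0)) = x0 - \<rho> * y0 + (\<bar>y0\<bar> + \<epsilon>) * (b * sgn (W 0))"
        by (simp add: T_def ghat_def)
      show ?thesis unfolding e using gb[of y0 "\<bar>y0\<bar>" "W 0"]
        abs_triangle_ineq[of "x0 - \<rho> * y0" "(\<bar>y0\<bar> + \<epsilon>) * (b * sgn (W 0))"] abs_triangle_ineq4[of x0 "\<rho> * y0"]
        by linarith
    qed
    then have "?P (Suc 0)"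
      by (intro exI[of _ "max (\<bar>x0\<bar> + \<bar>\<rho> * y0\<bar> + (\<bar>y0\<bar> + \<epsilon>) * \<bar>b\<bar>) \<bar>y1\<bar>"] allI conjI)
        (auto simp del: traj.simps intro: order_trans[OF _ max.cobounded1], simp add: T_def)
    moreover have "?P 0" by (intro exI[of _ "max \<bar>x0\<bar> \<bar>y0\<bar>"]) (auto simp: T_def)
    ultimately show ?case by simp
  next
    case (Suc n)
    then obtain B1 B2 where B1: "\<And>W. \<bar>fst (T W n)\<bar> \<le> B1 \<and> \<bar>snd (T W n)\<bar> \<le> B1"
      and B2: "\<And>W. \<bar>fst (T W (Suc n))\<bar> \<le> B2 \<and> \<bar>snd (T W (Suc n))\<bar> \<le> B2" by blast
    define B where "B = max B1 B2"
    have b1: "\<bar>fst (T W n)\<bar> \<le> B" "\<bar>snd (T W n)\<bar> \<le> B"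
     and b2: "\<bar>fst (T W (Suc n))\<bar> \<le> B" "\<bar>snd (T W (Suc n))\<bar> \<le> B" for W
      using B1[of W] B2[of W] by (auto simp: B_def)
    define K where "K = \<bar>Jstar\<bar> + \<bar>\<mu>\<bar> * (B + \<bar>xstar\<bar>)\<^sup>2"
    have fx: "\<bar>fst (T W (Suc (Suc n)))\<bar> \<le> B + \<bar>\<rho>\<bar> * B + (B + \<epsilon>) * \<bar>b\<bar>" for W
    proof -
      have e: "fst (T W (Suc (Suc n))) = fst (T W (Suc n)) - \<rho> * snd (T W (Suc n))
           + (\<bar>snd (T W (Suc n))\<bar> + \<epsilon>) * (b * sgn (W (Suc n)))"
        by (simp add: T_def Let_def case_prod_beta ghat_def)
      have "\<bar>\<rho> * snd (T W (Suc n))\<bar> \<le> \<bar>\<rho>\<bar> * B" using b2(2)[of W] by (simp add: abs_mult mult_left_mono)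
      then show ?thesis unfolding e using b2[of W] gb[OF b2(2)[of W], of "W (Suc n)"]
        abs_triangle_ineq[of "fst (T W (Suc n)) - \<rho> * snd (T W (Suc n))" "(\<bar>snd (T W (Suc n))\<bar> + \<epsilon>) * (b * sgn (W (Suc n)))"]
        abs_triangle_ineq4[of "fst (T W (Suc n))" "\<rho> * snd (T W (Suc n))"] by linarith
    qed
    have fy: "\<bar>snd (T W (Suc (Suc n)))\<bar> \<le> \<bar>1 - \<beta>\<bar> * B + \<bar>a\<bar> * (2 * K) / \<epsilon>" for W
    proof -
      let ?J = "\<lambda>x. Jstar + \<mu> / 2 * (x - xstar)\<^sup>2"
      have e: "snd (T W (Suc (Suc n))) = (1 - \<beta>) * snd (T W (Suc n))
           + a * sgn (W n) * (?J (fst (T W (Suc n))) - ?J (fst (T W n))) / (\<bar>snd (T W n)\<bar> + \<epsilon>)"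
        by (simp add: T_def Let_def case_prod_beta hhat_def)
      have "\<bar>?J (fst (T W (Suc n))) - ?J (fst (T W n))\<bar> \<le> 2 * K"
        using Jbound[OF b2(1)[of W], of Jstar \<mu> xstar] Jbound[OF b1(1)[of W], of Jstar \<mu> xstar]
        unfolding K_def by (rule absdiff)
      from divbound[OF sg[of "W n"] this eps, where a=a and y="snd (T W n)"]
      have "\<bar>a * sgn (W n) * (?J (fst (T W (Suc n))) - ?J (fst (T W n))) / (\<bar>snd (T W n)\<bar> + \<epsilon>)\<bar>
         \<le> \<bar>a\<bar> * (2 * K) / \<epsilon>" .
      moreover have "\<bar>(1 - \<beta>) * snd (T W (Suc n))\<bar> \<le> \<bar>1 - \<beta>\<bar> * B"
        using b2(2)[of W] by (simp add: abs_mult mult_left_mono)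
      ultimately show ?thesis unfolding e
        using abs_triangle_ineq[of "(1 - \<beta>) * snd (T W (Suc n))" "a * sgn (W n) * (?J (fst (T W (Suc n))) - ?J (fst (T W n))) / (\<bar>snd (T W n)\<bar> + \<epsilon>)"]
        by linarith
    qed
    have "?P (Suc (Suc n))"
      by (rule exI[of _ "max (B + \<bar>\<rho>\<bar> * B + (B + \<epsilon>) * \<bar>b\<bar>) (\<bar>1 - \<beta>\<bar> * B + \<bar>a\<bar> * (2 * K) / \<epsilon>)"])
         (use fx fy in \<open>meson max.coboundedI1 max.coboundedI2\<close>)
    then show ?case using Suc by simp
  qed
  then show ?thesis unfolding T_def by blast
qed


lemma indep_traj:
  fixes w :: "nat \<Rightarrow> 'a \<Rightarrow> real" and m :: nat and \<Phi> :: "real \<Rightarrow> real \<Rightarrow> real" and G :: "real \<Rightarrow> real"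
  assumes P: "prob_space M" and ind: "prob_space.indep_vars M (\<lambda>_. borel) w UNIV"
    and J: "J \<in> borel_measurable borel"
    and Phi: "(\<lambda>p. \<Phi> (fst p) (snd p)) \<in> borel_measurable (borel \<Otimes>\<^sub>M borel)"
    and G: "G \<in> borel_measurable borel"
    and iF: "integrable M (\<lambda>s. \<Phi> (fst (traj \<rho> \<beta> \<epsilon> (\<lambda>v. a * sgn v) (\<lambda>v. b * sgn v) J x0 y0 y1 (\<lambda>i. w i s) m))
                                 (snd (traj \<rho> \<beta> \<epsilon> (\<lambda>v. a * sgn v) (\<lambda>v. b * sgn v) J x0 y0 y1 (\<lambda>i. w i s) m)))"
    and iG: "integrable M (\<lambda>s. G (w m s))"
  shows "(\<integral>s. \<Phi> (fst (traj \<rho> \<beta> \<epsilon> (\<lambda>v. a * sgn v) (\<lambda>v. b * sgn v) J x0 y0 y1 (\<lambda>i. w i s) m))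
                 (snd (traj \<rho> \<beta> \<epsilon> (\<lambda>v. a * sgn v) (\<lambda>v. b * sgn v) J x0 y0 y1 (\<lambda>i. w i s) m)) * G (w m s) \<partial>M)
       = (\<integral>s. \<Phi> (fst (traj \<rho> \<beta> \<epsilon> (\<lambda>v. a * sgn v) (\<lambda>v. b * sgn v) J x0 y0 y1 (\<lambda>i. w i s) m))
                 (snd (traj \<rho> \<beta> \<epsilon> (\<lambda>v. a * sgn v) (\<lambda>v. b * sgn v) J x0 y0 y1 (\<lambda>i. w i s) m)) \<partial>M)
         * (\<integral>s. G (w m s) \<partial>M)"
proof -
  define T where "T = traj \<rho> \<beta> \<epsilon> (\<lambda>v. a * sgn v) (\<lambda>v. b * sgn v) J x0 y0 y1"
  define F where "F v = \<Phi> (fst (T v m)) (snd (T v m))" for v :: "nat \<Rightarrow> real"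
  have loc: "T (restrict (\<lambda>i. w i s) {..<m}) m = T (\<lambda>i. w i s) m" for s
    unfolding T_def by (rule traj_local[where m=m]) auto
  have mT: "(\<lambda>v. fst (T (\<lambda>i. v i) m)) \<in> borel_measurable (PiM {..<m} (\<lambda>_. borel))
       \<and> (\<lambda>v. snd (T (\<lambda>i. v i) m)) \<in> borel_measurable (PiM {..<m} (\<lambda>_. borel))"
    unfolding T_def by (rule traj_meas[where W="\<lambda>i v. v i" and m=m and n=m, OF J]) auto
  have Fm: "F \<in> borel_measurable (PiM {..<m} (\<lambda>_. borel))"
  proof -
    have "(\<lambda>v. (fst (T v m), snd (T v m))) \<in> measurable (PiM {..<m} (\<lambda>_. borel)) (borel \<Otimes>\<^sub>M borel)"
      using mT by (intro measurable_Pair) auto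
    from measurable_compose[OF this Phi] show ?thesis by (simp add: F_def[abs_def])
  qed
  have "(\<integral>s. F (restrict (\<lambda>i. w i s) {..<m}) * G (w m s) \<partial>M)
       = (\<integral>s. F (restrict (\<lambda>i. w i s) {..<m}) \<partial>M) * (\<integral>s. G (w m s) \<partial>M)"
    by (rule indep_prod[OF P ind Fm G]) (use iF iG in \<open>simp_all add: F_def[unfolded T_def] loc[unfolded T_def]\<close>)
  then show ?thesis by (simp add: F_def[unfolded T_def] loc[unfolded T_def])
qed

theorem lemma5:
  fixes M :: "'a measure" and w :: "nat \<Rightarrow> 'a \<Rightarrow> real"
    and \<rho> \<beta> \<epsilon> \<omega> \<mu> xstar Jstar x0 y0 y1 :: real
    and h g J :: "real \<Rightarrow> real" and k :: nat
  assumes "prob_space M"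
    and "\<rho> > 0" and "0 < \<beta>" and "\<beta> < 2" and "\<epsilon> > 0" and "\<omega> > 0"
    and "prob_space.indep_vars M (\<lambda>_. borel) w UNIV"
    and "\<And>i s. s \<in> space M \<Longrightarrow> w i s = - \<omega> \<or> w i s = \<omega>"
    and "\<And>i. measure M {s \<in> space M. w i s = \<omega>} = 1/2"
    and "\<And>i. measure M {s \<in> space M. w i s = - \<omega>} = 1/2"
    and "\<And>v. h (- v) = - h v" and "\<And>v. g (- v) = - g v"
    and "\<And>v. sgn (g v) = sgn (h v)"
    and "\<And>v. g v = 0 \<longleftrightarrow> v = 0" and "\<And>v. h v = 0 \<longleftrightarrow> v = 0"
    and "\<mu> > 0"
    and "J = (\<lambda>x. Jstar + \<mu> / 2 * (x - xstar)\<^sup>2)"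
    and "k \<ge> 1"
  shows "prob_space.expectation M
           (\<lambda>s. fst (traj \<rho> \<beta> \<epsilon> h g J x0 y0 y1 (\<lambda>i. w i s) (Suc k)) - xstar)
         = prob_space.expectation M
             (\<lambda>s. fst (traj \<rho> \<beta> \<epsilon> h g J x0 y0 y1 (\<lambda>i. w i s) k) - xstar)
           - \<rho> * prob_space.expectation M
             (\<lambda>s. snd (traj \<rho> \<beta> \<epsilon> h g J x0 y0 y1 (\<lambda>i. w i s) k))
       \<and> prob_space.expectation M
           (\<lambda>s. snd (traj \<rho> \<beta> \<epsilon> h g J x0 y0 y1 (\<lambda>i. w i s) (Suc k)))
         = (1 - \<beta>) * prob_space.expectation M
             (\<lambda>s. snd (traj \<rho> \<beta> \<epsilon> h g J x0 y0 y1 (\<lambda>i. w i s) k))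
           + \<mu> * prob_space.expectation M (\<lambda>s. h (w k s) * g (w k s))
             * prob_space.expectation M
               (\<lambda>s. fst (traj \<rho> \<beta> \<epsilon> h g J x0 y0 y1 (\<lambda>i. w i s) k) - xstar)"
proof -
  interpret P: prob_space M by (rule assms(1))
  have wm[measurable]: "w i \<in> borel_measurable M" for i
    using assms(7) unfolding P.indep_vars_def by auto
  define hw where "hw = h \<omega>"
  define gw where "gw = g \<omega>"
  define T where "T = traj \<rho> \<beta> \<epsilon> (\<lambda>v. hw * sgn v) (\<lambda>v. gw * sgn v) J x0 y0 y1"
  define X where "X n s = fst (T (\<lambda>i. w i s) n)" for n s
  define Y where "Y n s = snd (T (\<lambda>i. w i s) n)" for n s
  have Jm[measurable]: "J \<in> borel_measurable borel" unfolding assms(17) by measurable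
  have orig: "traj \<rho> \<beta> \<epsilon> h g J x0 y0 y1 (\<lambda>i. w i s) n = T (\<lambda>i. w i s) n" if "s \<in> space M" for s n
    unfolding T_def hw_def gw_def by (rule traj_sgn) (use assms(6,11,12) assms(8)[OF that] in auto)
  have XYm[measurable]: "X n \<in> borel_measurable M" "Y n \<in> borel_measurable M" for n
    using traj_meas[where W=w and N=M and m=n and n=n and J=J, OF Jm]
    by (auto simp: X_def[abs_def] Y_def[abs_def] T_def)
  have bnd: "\<exists>B. \<forall>s. \<bar>X n s\<bar> \<le> B \<and> \<bar>Y n s\<bar> \<le> B" for n
  proof -
    obtain B where "\<forall>W. \<bar>fst (T W n)\<bar> \<le> B \<and> \<bar>snd (T W n)\<bar> \<le> B"
      using traj_bound[OF assms(5)] unfolding T_def assms(17) by blast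
    then show ?thesis unfolding X_def Y_def by blast
  qed
  have intb: "integrable M f" if "f \<in> borel_measurable M" "\<And>s. s \<in> space M \<Longrightarrow> \<bar>f s\<bar> \<le> B" for f :: "'a \<Rightarrow> real" and B
    by (rule P.integrable_const_bound[where B=B]) (use that in auto)
  have sq: "(sgn (w i s))\<^sup>2 = 1" "\<bar>sgn (w i s)\<bar> \<le> 1" if "s \<in> space M" for i s
    using assms(8)[OF that, of i] assms(6) by auto
  have wnz: "w i s \<noteq> 0" if "s \<in> space M" for i s
    using assms(8)[OF that, of i] assms(6) by auto
  have hg: "h (w i s) * g (w i s) = hw * gw" if "s \<in> space M" for i s
    using assms(8)[OF that, of i] assms(6,11,12) by (auto simp: hw_def gw_def)
  have iX: "integrable M (X n)" "integrable M (Y n)" for n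
  proof -
    obtain B where B: "\<And>s. \<bar>X n s\<bar> \<le> B \<and> \<bar>Y n s\<bar> \<le> B" using bnd by blast
    show "integrable M (X n)" by (rule intb[of "X n" B]) (use B in auto)
    show "integrable M (Y n)" by (rule intb[of "Y n" B]) (use B in auto)
  qed
  have iabs: "integrable M (\<lambda>s. \<bar>Y n s\<bar> + \<epsilon>)" for n
  proof -
    obtain B where B: "\<And>s. \<bar>X n s\<bar> \<le> B \<and> \<bar>Y n s\<bar> \<le> B" using bnd by blast
    show ?thesis by (rule intb[of _ "B + \<epsilon>"]) (use B assms(5) in auto)
  qed
  have isg: "integrable M (\<lambda>s. c * sgn (w i s))" for c i
    by (rule intb[of _ "\<bar>c\<bar>"]) (use sq in \<open>auto simp: abs_mult intro: mult_left_le\<close>)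
  have Esg: "(\<integral>s. sgn (w i s) \<partial>M) = 0" for i
  proof -
    define A where "A = {s \<in> space M. w i s = \<omega>}"
    define B where "B = {s \<in> space M. w i s = - \<omega>}"
    have [measurable]: "A \<in> sets M" "B \<in> sets M" unfolding A_def B_def by measurable
    have iA: "integrable M (indicator A :: 'a \<Rightarrow> real)" "integrable M (indicator B :: 'a \<Rightarrow> real)"
      by (auto intro!: integrable_real_indicator simp: less_top[symmetric])
    have AA: "A \<inter> space M = A" "B \<inter> space M = B" unfolding A_def B_def by auto
    have "(\<integral>s. sgn (w i s) \<partial>M) = (\<integral>s. indicator A s - indicator B s \<partial>M)"
      by (rule Bochner_Integration.integral_cong) (use assms(6) assms(8) in \<open>auto simp: A_def B_def indicator_def\<close>)
    also have "\<dots> = measure M A - measure M B"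
      by (subst Bochner_Integration.integral_diff) (use iA AA in auto)
    also have "\<dots> = 0" using assms(9)[of i] assms(10)[of i] unfolding A_def B_def by simp
    finally show ?thesis .
  qed
  have E1: "X (Suc n) s = X n s - \<rho> * Y n s + (\<bar>Y n s\<bar> + \<epsilon>) * (gw * sgn (w n s))" for n s
    by (cases n) (simp_all add: X_def Y_def T_def ghat_def Let_def case_prod_beta)
  have eq1: "(\<integral>s. X (Suc n) s - xstar \<partial>M) = (\<integral>s. X n s - xstar \<partial>M) - \<rho> * (\<integral>s. Y n s \<partial>M)" for n
  proof -
    have iprod: "integrable M (\<lambda>s. (\<bar>Y n s\<bar> + \<epsilon>) * (gw * sgn (w n s)))"
    proof -
      have "integrable M (\<lambda>s. X (Suc n) s - X n s + \<rho> * Y n s)" using iX by simp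
      moreover have "integrable M (\<lambda>s. X (Suc n) s - X n s + \<rho> * Y n s) = integrable M (\<lambda>s. (\<bar>Y n s\<bar> + \<epsilon>) * (gw * sgn (w n s)))"
        by (rule Bochner_Integration.integrable_cong) (auto simp: E1)
      ultimately show ?thesis by simp
    qed
    have ind: "(\<integral>s. (\<bar>Y n s\<bar> + \<epsilon>) * (gw * sgn (w n s)) \<partial>M) = (\<integral>s. \<bar>Y n s\<bar> + \<epsilon> \<partial>M) * (\<integral>s. gw * sgn (w n s) \<partial>M)"
      using indep_traj[OF assms(1,7) Jm, where \<Phi>="\<lambda>x y. \<bar>y\<bar> + \<epsilon>" and G="\<lambda>v. gw * sgn v" and m=n,
          of \<rho> \<beta> \<epsilon> hw gw x0 y0 y1] iabs[of n] isg[of gw n]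
      by (simp add: X_def Y_def T_def)
    have "(\<integral>s. X (Suc n) s - xstar \<partial>M) = (\<integral>s. (X n s - xstar - \<rho> * Y n s) + (\<bar>Y n s\<bar> + \<epsilon>) * (gw * sgn (w n s)) \<partial>M)"
      by (rule Bochner_Integration.integral_cong) (auto simp: E1)
    also have "\<dots> = (\<integral>s. X n s - xstar - \<rho> * Y n s \<partial>M) + (\<integral>s. (\<bar>Y n s\<bar> + \<epsilon>) * (gw * sgn (w n s)) \<partial>M)"
      by (rule Bochner_Integration.integral_add) (use iX iprod in auto)
    also have "(\<integral>s. (\<bar>Y n s\<bar> + \<epsilon>) * (gw * sgn (w n s)) \<partial>M) = 0"
      unfolding ind using Esg[of n] by simp
    also have "(\<integral>s. X n s - xstar - \<rho> * Y n s \<partial>M) = (\<integral>s. X n s - xstar \<partial>M) - \<rho> * (\<integral>s. Y n s \<partial>M)"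
      using iX by simp
    finally show ?thesis by simp
  qed
  obtain m where km: "k = Suc m" using assms(18) by (cases k) auto
  define Z where "Z s = \<mu>/2*hw*((-\<rho>*Y m s)*(2*(X m s-xstar) - \<rho>*Y m s)/(\<bar>Y m s\<bar> + \<epsilon>) + (\<bar>Y m s\<bar> + \<epsilon>)*gw^2)" for s
  have E2: "Y (Suc (Suc m)) s = (1-\<beta>)*Y (Suc m) s + sgn (w m s) * Z s + \<mu>*hw*gw*(X m s - xstar - \<rho>*Y m s)"
    if "s \<in> space M" for s
  proof -
    have "Y (Suc (Suc m)) s = (1-\<beta>)*Y (Suc m) s + hw * sgn (w m s) * (J (X (Suc m) s) - J (X m s)) / (\<bar>Y m s\<bar> + \<epsilon>)"
      by (simp add: X_def Y_def T_def hhat_def Let_def case_prod_beta)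
    also have "\<dots> = (1-\<beta>)*Y (Suc m) s + hw * sgn (w m s) * ((Jstar + \<mu>/2*(X m s - \<rho>*Y m s + (\<bar>Y m s\<bar> + \<epsilon>)*(gw* sgn (w m s)) - xstar)^2) - (Jstar + \<mu>/2*(X m s - xstar)^2)) / (\<bar>Y m s\<bar> + \<epsilon>)"
      unfolding E1[of m s] assms(17) ..
    also have "\<dots> = (1-\<beta>)*Y (Suc m) s + sgn (w m s) * Z s + \<mu>*hw*gw*(X m s - xstar - \<rho>*Y m s)"
      unfolding Z_def by (rule alg) (use sq[OF that] assms(5) in auto)
    finally show ?thesis .
  qed
  have Zm[measurable]: "Z \<in> borel_measurable M" unfolding Z_def[abs_def] by measurable
  have icZ: "integrable M (\<lambda>s. sgn (w m s) * Z s)"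
  proof -
    have "integrable M (\<lambda>s. Y (Suc (Suc m)) s - (1-\<beta>)*Y (Suc m) s - \<mu>*hw*gw*(X m s - xstar - \<rho>*Y m s))"
      using iX by simp
    moreover have "integrable M (\<lambda>s. Y (Suc (Suc m)) s - (1-\<beta>)*Y (Suc m) s - \<mu>*hw*gw*(X m s - xstar - \<rho>*Y m s)) = integrable M (\<lambda>s. sgn (w m s) * Z s)"
      by (rule Bochner_Integration.integrable_cong) (auto simp: E2)
    ultimately show ?thesis by simp
  qed
  have iZ: "integrable M Z"
    by (rule Bochner_Integration.integrable_bound[OF icZ Zm])
       (use wnz in \<open>auto simp: abs_mult intro!: AE_I2\<close>)
  have EZ: "(\<integral>s. Z s * sgn (w m s) \<partial>M) = (\<integral>s. Z s \<partial>M) * (\<integral>s. sgn (w m s) \<partial>M)"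
    unfolding Z_def X_def Y_def T_def
    apply (rule indep_traj[OF assms(1,7) Jm, where \<Phi>="\<lambda>x y. \<mu>/2*hw*((-\<rho>*y)*(2*(x-xstar) - \<rho>*y)/(\<bar>y\<bar> + \<epsilon>) + (\<bar>y\<bar> + \<epsilon>)*gw^2)"
        and G="\<lambda>v. sgn v" and m=m])
      apply measurable
    using iZ isg[of 1 m] by (simp_all add: Z_def[abs_def] X_def Y_def T_def)
  have eq2: "(\<integral>s. Y (Suc k) s \<partial>M) = (1-\<beta>) * (\<integral>s. Y k s \<partial>M) + \<mu>*hw*gw * (\<integral>s. X k s - xstar \<partial>M)"
  proof -
    have "(\<integral>s. Y (Suc k) s \<partial>M) = (\<integral>s. ((1-\<beta>)*Y (Suc m) s + \<mu>*hw*gw*(X m s - xstar - \<rho>*Y m s)) + Z s * sgn (w m s) \<partial>M)"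
      unfolding km by (rule Bochner_Integration.integral_cong) (auto simp: E2)
    also have "\<dots> = (\<integral>s. (1-\<beta>)*Y (Suc m) s + \<mu>*hw*gw*(X m s - xstar - \<rho>*Y m s) \<partial>M) + (\<integral>s. Z s * sgn (w m s) \<partial>M)"
      by (rule Bochner_Integration.integral_add) (use iX icZ in \<open>auto simp: mult.commute\<close>)
    also have "(\<integral>s. Z s * sgn (w m s) \<partial>M) = 0" unfolding EZ Esg by simp
    also have "(\<integral>s. (1-\<beta>)*Y (Suc m) s + \<mu>*hw*gw*(X m s - xstar - \<rho>*Y m s) \<partial>M)
        = (1-\<beta>) * (\<integral>s. Y (Suc m) s \<partial>M) + \<mu>*hw*gw*((\<integral>s. X m s - xstar \<partial>M) - \<rho> * (\<integral>s. Y m s \<partial>M))"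
      using iX by simp
    also have "(\<integral>s. X m s - xstar \<partial>M) - \<rho> * (\<integral>s. Y m s \<partial>M) = (\<integral>s. X (Suc m) s - xstar \<partial>M)"
      using eq1[of m] by simp
    finally show ?thesis unfolding km by simp
  qed
  have Egam: "(\<integral>s. h (w k s) * g (w k s) \<partial>M) = hw * gw"
  proof -
    have "(\<integral>s. h (w k s) * g (w k s) \<partial>M) = (\<integral>s. hw * gw \<partial>M)"
      by (rule Bochner_Integration.integral_cong) (auto simp: hg)
    then show ?thesis by (simp add: P.prob_space)
  qed
  have G1: "(\<integral>s. fst (traj \<rho> \<beta> \<epsilon> h g J x0 y0 y1 (\<lambda>i. w i s) n) - xstar \<partial>M) = (\<integral>s. X n s - xstar \<partial>M)" for n
    by (rule Bochner_Integration.integral_cong) (auto simp: orig X_def)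
  have G2: "(\<integral>s. snd (traj \<rho> \<beta> \<epsilon> h g J x0 y0 y1 (\<lambda>i. w i s) n) \<partial>M) = (\<integral>s. Y n s \<partial>M)" for n
    by (rule Bochner_Integration.integral_cong) (auto simp: orig Y_def)
  show ?thesis unfolding G1 G2 Egam using eq1[of k] eq2 by (simp add: mult.assoc mult.commute mult.left_commute)
qed

end
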